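(* Let $\alpha:[0,1]\to\mathrm{Mult}_n(\mathbb{C})$ be a path and let $\widetilde\alpha(0)\in\mathbb{C}^n$ satisfy $\mathrm{Mult}(\widetilde\alpha(0))=\alpha(0)$. If $\alpha$ has weakly decreasing shape, then there exist at most $n!$ paths $\widetilde\alpha:[0,1]\to\mathbb{C}^n$ starting at $\widetilde\alpha(0)$ with $\alpha=\mathrm{Mult}\circ\widetilde\alpha$.
   Context: $\mathrm{Mult}_n(\mathbb{C})=\mathbb{C}^n/\mathrm{Sym}_n$ is the space of $n$-element multisets in $\mathbb{C}$ and $\mathrm{Mult}$ the quotient map. The shape of a multiset is the integer partition of $n$ formed by its multiplicities; partitions are ordered by $\lambda\le\mu$ iff $\mu$ is obtained by summing blocks of a partition of the parts of $\lambda$. A path has weakly decreasing shape if $s\le t$ implies $\mathrm{Shape}(\alpha(s))\ge\mathrm{Shape}(\alpha(t))$. *)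

theory Defs
  imports "HOL-Analysis.Analysis" "HOL-Library.Multiset"
begin

definition Mult :: "complex^'n \<Rightarrow> complex multiset" where
  "Mult x = image_mset (\<lambda>i. x $ i) (mset_set (UNIV :: 'n set))"

text \<open>Mult_n(C) with the quotient topology induced by Mult.\<close>
definition mult_open :: "'n::finite itself \<Rightarrow> complex multiset set \<Rightarrow> bool" where
  "mult_open _ U \<longleftrightarrow> U \<subseteq> range (Mult :: complex^'n \<Rightarrow> complex multiset)
      \<and> open ((Mult :: complex^'n \<Rightarrow> complex multiset) -` U)"

definition mult_top :: "'n::finite itself \<Rightarrow> complex multiset topology" where
  "mult_top _ = topology (mult_open TYPE('n))"

lemma istopology_mult_open: "istopology (mult_open TYPE('n::finite))"
  unfolding istopology_def mult_open_def
  by (auto simp: open_Int vimage_Union intro!: open_Union)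

definition Shape :: "'a multiset \<Rightarrow> nat multiset" where
  "Shape M = image_mset (count M) (mset_set (set_mset M))"

definition partition_le :: "nat multiset \<Rightarrow> nat multiset \<Rightarrow> bool" where
  "partition_le lam mu \<longleftrightarrow> (\<exists>P :: nat multiset multiset.
      (\<forall>B \<in># P. B \<noteq> {#}) \<and> sum_mset P = lam \<and> image_mset sum_mset P = mu)"

definition weakly_decreasing_shape :: "(real \<Rightarrow> 'a multiset) \<Rightarrow> bool" where
  "weakly_decreasing_shape \<alpha> \<longleftrightarrow>
     (\<forall>s\<in>{0..1}. \<forall>t\<in>{0..1}. s \<le> t \<longrightarrow> partition_le (Shape (\<alpha> t)) (Shape (\<alpha> s)))"

end

theory Submission imports Defs "HOL-Combinatorics.Multiset_Permutations" begin

lemma near_lemma: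
  fixes g h :: "real \<Rightarrow> complex^'n"
  assumes "continuous_on S g" "continuous_on S h" "s \<in> S"
  shows "\<exists>d>0. \<forall>u\<in>S. dist u s < d \<longrightarrow> (\<forall>k l. g s $ k \<noteq> h s $ l \<longrightarrow> g u $ k \<noteq> h u $ l)"
proof -
  have "\<forall>\<^sub>F u in at s within S. g s $ k \<noteq> h s $ l \<longrightarrow> g u $ k \<noteq> h u $ l" for k l
  proof (cases "g s $ k = h s $ l")
    case False
    have "((\<lambda>u. g u $ k - h u $ l) \<longlongrightarrow> g s $ k - h s $ l) (at s within S)"
      using assms by (intro tendsto_intros)
        (auto simp: continuous_on_def)
    then have "\<forall>\<^sub>F u in at s within S. g u $ k - h u $ l \<noteq> 0"
      using False by (intro tendsto_imp_eventually_ne) auto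
    then show ?thesis by eventually_elim auto
  qed auto
  then have "\<forall>\<^sub>F u in at s within S. \<forall>p::'n\<times>'n. g s $ fst p \<noteq> h s $ snd p \<longrightarrow> g u $ fst p \<noteq> h u $ snd p"
    by (intro eventually_all_finite) auto
  then obtain d where "d > 0" and d: "\<forall>u\<in>S. u \<noteq> s \<and> dist u s < d \<longrightarrow>
      (\<forall>p::'n\<times>'n. g s $ fst p \<noteq> h s $ snd p \<longrightarrow> g u $ fst p \<noteq> h u $ snd p)"
    unfolding eventually_at by blast
  show ?thesis
  proof (intro exI[of _ d] conjI ballI impI allI)
    fix u k l assume "u \<in> S" "dist u s < d" "g s $ k \<noteq> h s $ l"
    then show "g u $ k \<noteq> h u $ l" using d[rule_format, of u "(k,l)"] by (cases "u = s") auto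
  qed fact
qed

lemma size_sum_mset_ge: "(\<forall>B\<in>#P. B \<noteq> {#}) \<Longrightarrow> size P \<le> size (sum_mset (P :: 'a multiset multiset))"
proof (induction P)
  case empty then show ?case by simp
next
  case (add x P)
  then have "size x \<ge> 1" by (cases x) auto
  with add show ?case by auto
qed

lemma partition_le_size: "partition_le lam mu \<Longrightarrow> size mu \<le> size lam"
  unfolding partition_le_def using size_sum_mset_ge by fastforce

lemma size_Shape: "size (Shape M) = card (set_mset M)"
  by (simp add: Shape_def)

lemma set_Mult: "set_mset (Mult x) = range (\<lambda>i. x $ i)"
  by (simp add: Mult_def)

lemma size_Mult: "size (Mult (x::complex^'n)) = CARD('n)"
  by (simp add: Mult_def)

lemma merge_backward:
  fixes g :: "real \<Rightarrow> complex^'n"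
  assumes cont: "continuous_on {0..1} g"
    and mono: "\<And>s t. s \<in> {0..1} \<Longrightarrow> t \<in> {0..1} \<Longrightarrow> s \<le> t \<Longrightarrow>
                 card (range (\<lambda>k. g s $ k)) \<le> card (range (\<lambda>k. g t $ k))"
    and "0 \<le> \<tau>" "\<tau> \<le> t" "t \<le> 1" and eq: "g t $ i = g t $ j"
  shows "g \<tau> $ i = g \<tau> $ j"
proof (rule ccontr)
  assume ne: "g \<tau> $ i \<noteq> g \<tau> $ j"
  define Z where "Z = {u \<in> {\<tau>..t}. g u $ i - g u $ j = 0}"
  have contZ: "continuous_on {\<tau>..t} (\<lambda>u. g u $ i - g u $ j)"
    by (intro continuous_intros continuous_on_subset[OF cont]) (use assms in auto)
  have "closed Z" unfolding Z_def by (rule continuous_closed_preimage_constant[OF contZ]) auto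
  moreover have "t \<in> Z" using eq assms by (auto simp: Z_def)
  moreover have "bdd_below Z" unfolding Z_def by (rule bdd_belowI[of _ \<tau>]) auto
  ultimately have sZ: "Inf Z \<in> Z" using closed_contains_Inf by blast
  define s where "s = Inf Z"
  have sZ': "s \<in> Z" using sZ s_def by simp
  have low: "\<And>u. u \<in> Z \<Longrightarrow> s \<le> u" unfolding s_def
    by (rule cInf_lower) (use \<open>bdd_below Z\<close> in auto)
  have "\<tau> \<noteq> s" using sZ' ne by (auto simp: Z_def)
  then have ts: "\<tau> < s" using sZ' by (auto simp: Z_def)
  have s01: "s \<in> {0..1}" using sZ' assms by (auto simp: Z_def)
  obtain d where "d > 0" and d: "\<forall>u\<in>{0..1}. dist u s < d \<longrightarrow>
      (\<forall>k l. g s $ k \<noteq> g s $ l \<longrightarrow> g u $ k \<noteq> g u $ l)"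
    using near_lemma[OF cont cont s01] by blast
  define u where "u = max \<tau> (s - d/2)"
  have u01: "u \<in> {0..1}" and us: "u < s" and "\<tau> \<le> u" and du: "dist u s < d"
    using s01 ts \<open>d > 0\<close> assms by (auto simp: u_def dist_real_def)
  have "u \<notin> Z" using low us by force
  then have uij: "g u $ i \<noteq> g u $ j" using \<open>\<tau> \<le> u\<close> us sZ' by (auto simp: Z_def)
  have sij: "g s $ i = g s $ j" using sZ' by (auto simp: Z_def)
  have imp: "g u $ k = g u $ l \<Longrightarrow> g s $ k = g s $ l" for k l
    using d u01 du by blast
  define A where "A = range (\<lambda>k. g u $ k)"
  define B where "B = range (\<lambda>k. g s $ k)"
  define \<phi> where "\<phi> v = g s $ (SOME k. g u $ k = v)" for v
  have phik: "\<phi> (g u $ k) = g s $ k" for k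
  proof -
    have "g u $ (SOME k'. g u $ k' = g u $ k) = g u $ k" by (rule someI) auto
    then show ?thesis unfolding \<phi>_def by (rule imp)
  qed
  have "\<phi> ` A = B" unfolding A_def B_def image_image phik ..
  moreover have "\<not> inj_on \<phi> A"
    unfolding inj_on_def A_def using phik[of i] phik[of j] sij uij by (metis rangeI)
  ultimately have "card B \<noteq> card A" using inj_on_iff_eq_card[of A \<phi>] by (auto simp: A_def)
  moreover have "card B \<le> card A" unfolding A_def B_def \<phi>_def
    using card_image_le \<open>\<phi> ` A = B\<close> by (metis A_def B_def finite finite_imageI)
  moreover have "card A \<le> card B" unfolding A_def B_def using mono[OF u01 s01] us by simp
  ultimately show False by simp
qed

lemma lift_unique:
  fixes g h :: "real \<Rightarrow> complex^'n"
  assumes contg: "continuous_on {0..1} g" and conth: "continuous_on {0..1} h"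
    and mono: "\<And>s t. s \<in> {0..1} \<Longrightarrow> t \<in> {0..1} \<Longrightarrow> s \<le> t \<Longrightarrow>
                 card (range (\<lambda>k. g s $ k)) \<le> card (range (\<lambda>k. g t $ k))"
    and rng: "\<And>u. u \<in> {0..1} \<Longrightarrow> range (\<lambda>k. h u $ k) = range (\<lambda>k. g u $ k)"
    and one: "g 1 = h 1"
    and u0: "u0 \<in> {0..1}"
  shows "g u0 = h u0"
proof (rule ccontr)
  assume ne: "g u0 \<noteq> h u0"
  define Z where "Z = {u \<in> {u0..1}. g u - h u = 0}"
  have contZ: "continuous_on {u0..1} (\<lambda>u. g u - h u)"
    by (intro continuous_intros continuous_on_subset[OF contg] continuous_on_subset[OF conth])
      (use u0 in auto)
  have "closed Z" unfolding Z_def by (rule continuous_closed_preimage_constant[OF contZ]) auto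
  moreover have "1 \<in> Z" using one u0 by (auto simp: Z_def)
  moreover have "bdd_below Z" unfolding Z_def by (rule bdd_belowI[of _ u0]) auto
  ultimately have sZ: "Inf Z \<in> Z" using closed_contains_Inf by blast
  define s where "s = Inf Z"
  have sZ': "s \<in> Z" using sZ s_def by simp
  have low: "\<And>u. u \<in> Z \<Longrightarrow> s \<le> u" unfolding s_def
    by (rule cInf_lower) (use \<open>bdd_below Z\<close> in auto)
  have "u0 \<noteq> s" using sZ' ne by (auto simp: Z_def)
  then have ts: "u0 < s" using sZ' by (auto simp: Z_def)
  have s01: "s \<in> {0..1}" using sZ' u0 by (auto simp: Z_def)
  have gs: "g s = h s" using sZ' by (auto simp: Z_def)
  obtain d where "d > 0" and d: "\<forall>u\<in>{0..1}. dist u s < d \<longrightarrow>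
      (\<forall>k l. g s $ k \<noteq> h s $ l \<longrightarrow> g u $ k \<noteq> h u $ l)"
    using near_lemma[OF contg conth s01] by blast
  define u where "u = max u0 (s - d/2)"
  have u01: "u \<in> {0..1}" and us: "u < s" and "u0 \<le> u" and du: "dist u s < d"
    using s01 ts \<open>d > 0\<close> u0 by (auto simp: u_def dist_real_def)
  have "g u = h u"
  proof (subst vec_eq_iff, intro allI)
    fix l
    have "h u $ l \<in> range (\<lambda>k. g u $ k)" using rng[OF u01] by blast
    then obtain k where k: "g u $ k = h u $ l" by auto
    then have "g s $ k = g s $ l" using d u01 du gs by metis
    then have "g u $ k = g u $ l"
      using merge_backward[OF contg mono, of u s k l] u01 s01 us by auto
    then show "g u $ l = h u $ l" using k by simp
  qed
  then have "u \<in> Z" using \<open>u0 \<le> u\<close> u01 by (auto simp: Z_def)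
  then show False using low us by force
qed

theorem corollary8p4:
  fixes \<alpha> :: "real \<Rightarrow> complex multiset" and x0 :: "complex^'n"
  assumes "continuous_map (top_of_set {0..1}) (mult_top TYPE('n)) \<alpha>"
    and "Mult x0 = \<alpha> 0"
    and "weakly_decreasing_shape \<alpha>"
  shows "finite {g \<in> extensional {0..1}. continuous_on {0..1} g \<and> g 0 = x0
                    \<and> (\<forall>t\<in>{0..1}. Mult (g t) = \<alpha> t)}
    \<and> card {g \<in> extensional {0..1}. continuous_on {0..1} g \<and> g 0 = x0
                    \<and> (\<forall>t\<in>{0..1}. Mult (g t) = \<alpha> t)} \<le> fact CARD('n)"
proof -
  define Ls where "Ls = {g \<in> extensional {0..1}. continuous_on {0..1} g \<and> g 0 = x0
                    \<and> (\<forall>t\<in>{0..1}. Mult (g t) = \<alpha> t)}"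
  have dmono: "card (set_mset (\<alpha> s)) \<le> card (set_mset (\<alpha> t))"
    if "s \<in> {0..1}" "t \<in> {0..1}" "s \<le> t" for s t
    using assms(3) that partition_le_size size_Shape
    unfolding weakly_decreasing_shape_def by metis
  obtain L :: "'n list" where L: "set L = UNIV" "distinct L"
    using finite_distinct_list[of "UNIV :: 'n set"] by auto
  have MultL: "Mult x = mset (map (\<lambda>i. x $ i) L)" for x :: "complex^'n"
    unfolding Mult_def using L mset_set_set[OF L(2)] by (metis mset_map)
  define f where "f g = map (\<lambda>i. (g (1::real) :: complex^'n) $ i) L" for g
  have inj: "inj_on f Ls"
  proof (rule inj_onI)
    fix g h assume g: "g \<in> Ls" and h: "h \<in> Ls" and fe: "f g = f h"
    have "g 1 = h 1" using fe L(1) unfolding f_def by (auto simp: vec_eq_iff map_eq_conv)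
    have "g u = h u" if "u \<in> {0..1}" for u
    proof (rule lift_unique[where ?u0.0=u])
      show "continuous_on {0..1} g" "continuous_on {0..1} h" using g h by (auto simp: Ls_def)
      show "card (range (\<lambda>k. g s $ k)) \<le> card (range (\<lambda>k. g t $ k))"
        if "s \<in> {0..1}" "t \<in> {0..1}" "s \<le> t" for s t
        using dmono[OF that] g that by (auto simp: Ls_def set_Mult[symmetric])
      show "range (\<lambda>k. h u $ k) = range (\<lambda>k. g u $ k)" if "u \<in> {0..1}" for u
        using g h that by (auto simp: Ls_def set_Mult[symmetric])
    qed fact+
    then show "g = h" using g h by (auto simp: Ls_def intro: extensionalityI)
  qed
  have sub: "f ` Ls \<subseteq> permutations_of_multiset (\<alpha> 1)"
  proof
    fix xs assume "xs \<in> f ` Ls"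
    then obtain g where g: "g \<in> Ls" and xs: "xs = f g" by auto
    have "mset xs = Mult (g 1)" unfolding xs f_def MultL ..
    also have "\<dots> = \<alpha> 1" using g by (auto simp: Ls_def)
    finally show "xs \<in> permutations_of_multiset (\<alpha> 1)" by (simp add: permutations_of_multiset_def)
  qed
  have fin: "finite (permutations_of_multiset (\<alpha> 1))"
    by (rule finite_permutations_of_multiset)
  then have finL: "finite Ls" using sub inj finite_imageD finite_subset by blast
  have "card Ls \<le> fact CARD('n)"
  proof (cases "Ls = {}")
    case False
    then obtain g where "g \<in> Ls" by auto
    then have sz: "size (\<alpha> 1) = CARD('n)" using size_Mult[of "g 1"] by (auto simp: Ls_def)
    have "card Ls = card (f ` Ls)" using card_image[OF inj] by simp
    also have "\<dots> \<le> card (permutations_of_multiset (\<alpha> 1))" by (rule card_mono[OF fin sub])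
    also have "\<dots> \<le> fact (size (\<alpha> 1))"
      by (simp add: card_permutations_of_multiset(1) div_le_dividend)
    finally show ?thesis using sz by simp
  qed simp
  then show ?thesis using finL unfolding Ls_def by blast
qed

end
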